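(* Let $w\in\mathbb{R}^n$, $w\ge0$. The following statements are equivalent: (a) $w$ is strongly bilevel feasible; (b) $\{w\}$ is a reaction set; (c) $\mathbf{W}(\mathbf{T}(w))=\{w\}$; (d) $(w,g(w))$ is an extreme point of $\operatorname{epi}(g)$; (e) $\dim\mathbf{T}(w)=n$.
   Context: Single-commodity network pricing setting: $G=(\mathcal{V},\mathcal{A})$ directed graph, arc costs $c\ge0$, nonempty tolled arc set $\mathcal{A}_1\subsetneq\mathcal{A}$, $n=|\mathcal{A}_1|$, $N$ node–arc incidence matrix, single origin $o$ and destination $d$ connected by a toll-free path, $b_o=1$, $b_d=-1$, $b_i=0$ otherwise, $\mathcal{X}=\{x\in\mathbb{R}^{\mathcal{A}}: Nx=b,\ x\ge0\}$, $x_{\mathcal{A}_1}$ the restriction of $x$ to $\mathcal{A}_1$; tolls $t\in\mathbb{R}^n$ are extended by zeros to $\bar t\in\mathbb{R}^{\mathcal{A}}$. Let $f(t)=\min\{c^\top x+t^\top x_{\mathcal{A}_1}: x\in\mathcal{X}\}$ for $t\ge0$, $f(t)=-\infty$ otherwise, and $g(w)=\sup_{t\in\mathbb{R}^n}\{f(t)-t^\top w\}$. A reaction set is a set $W=\{w:(w,z)\in F\text{ for some }z\}$ where $F$ is a face of $\operatorname{epi}(g)$ whose affine hull's direction space does not contain $(0,1)$. A vector $w\ge0$ is strongly bilevel feasible when $\{w\}$ is a reaction set. For $t\ge0$, $\mathbf{W}(t)$ is the set of $w$ such that $(w,x)$ is optimal for some $x$ in $\min_{w,x}\{c^\top x+t^\top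 w: x_{\mathcal{A}_1}\le w,\ Nx=b,\ w\ge0,\ x\ge0\}$, and for a set $T$, $\mathbf{W}(T)=\bigcap_{t\in T}\mathbf{W}(t)$. For $w\ge0$, $\mathbf{T}(w)$ is the set of $t$ that are parts of optimal solutions $(t,y)$ of $\max_{t,y}\{b^\top y-w^\top t: N^\top y-\bar t\le c,\ t\ge0\}$. *)

theory Defs
  imports "HOL-Analysis.Analysis" "HOL-Library.Extended_Real"
begin

text \<open>
  Arcs are of type 'k + 'f: Inl k are the tolled arcs (the set A1, indexed by the finite
  type 'k, so n = CARD('k)), Inr f are the toll-free arcs.
\<close>

definition node_supply :: "'v \<Rightarrow> 'v \<Rightarrow> 'v \<Rightarrow> real" where
  "node_supply orig dst i = (if i = orig then 1 else if i = dst then -1 else 0)"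

definition flow_conservation ::
  "('k::finite + 'f::finite \<Rightarrow> 'v::finite) \<Rightarrow> ('k + 'f \<Rightarrow> 'v) \<Rightarrow> 'v \<Rightarrow> 'v \<Rightarrow> ('k + 'f \<Rightarrow> real) \<Rightarrow> bool" where
  "flow_conservation tail head orig dst x \<longleftrightarrow>
     (\<forall>i. (\<Sum>e\<in>{e. tail e = i}. x e) - (\<Sum>e\<in>{e. head e = i}. x e) = node_supply orig dst i)"

definition Xset ::
  "('k::finite + 'f::finite \<Rightarrow> 'v::finite) \<Rightarrow> ('k + 'f \<Rightarrow> 'v) \<Rightarrow> 'v \<Rightarrow> 'v \<Rightarrow> ('k + 'f \<Rightarrow> real) set" where
  "Xset tail head orig dst = {x. flow_conservation tail head orig dst x \<and> (\<forall>e. 0 \<le> x e)}"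

definition restrA1 :: "('k::finite + 'f \<Rightarrow> real) \<Rightarrow> real^'k" where
  "restrA1 x = (\<chi> k. x (Inl k))"

definition ext_toll :: "real^'k \<Rightarrow> ('k + 'f \<Rightarrow> real)" where
  "ext_toll t e = (case e of Inl k \<Rightarrow> t $ k | Inr _ \<Rightarrow> 0)"

definition arc_cost :: "('k::finite + 'f::finite \<Rightarrow> real) \<Rightarrow> ('k + 'f \<Rightarrow> real) \<Rightarrow> real" where
  "arc_cost c x = (\<Sum>e\<in>UNIV. c e * x e)"

definition nonneg_vec :: "real^'k \<Rightarrow> bool" where
  "nonneg_vec v \<longleftrightarrow> (\<forall>k. 0 \<le> v $ k)"

definition fval ::
  "('k::finite + 'f::finite \<Rightarrow> 'v::finite) \<Rightarrow> ('k + 'f \<Rightarrow> 'v) \<Rightarrow> 'v \<Rightarrow> 'v \<Rightarrow> ('k + 'f \<Rightarrow> real)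
   \<Rightarrow> real^'k \<Rightarrow> ereal" where
  "fval tail head orig dst c t =
     (if nonneg_vec t
      then Inf ((\<lambda>x. ereal (arc_cost c x + t \<bullet> restrA1 x)) ` Xset tail head orig dst)
      else -\<infinity>)"

definition gval ::
  "('k::finite + 'f::finite \<Rightarrow> 'v::finite) \<Rightarrow> ('k + 'f \<Rightarrow> 'v) \<Rightarrow> 'v \<Rightarrow> 'v \<Rightarrow> ('k + 'f \<Rightarrow> real)
   \<Rightarrow> real^'k \<Rightarrow> ereal" where
  "gval tail head orig dst c w = (SUP t. fval tail head orig dst c t - ereal (t \<bullet> w))"

definition epi_g ::
  "('k::finite + 'f::finite \<Rightarrow> 'v::finite) \<Rightarrow> ('k + 'f \<Rightarrow> 'v) \<Rightarrow> 'v \<Rightarrow> 'v \<Rightarrow> ('k + 'f \<Rightarrow> real)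
   \<Rightarrow> ((real^'k) \<times> real) set" where
  "epi_g tail head orig dst c = {(w, z). gval tail head orig dst c w \<le> ereal z}"

definition aff_direction :: "('a::real_vector) set \<Rightarrow> 'a set" where
  "aff_direction F = span {p - q | p q. p \<in> F \<and> q \<in> F}"

definition reaction_set ::
  "('k::finite + 'f::finite \<Rightarrow> 'v::finite) \<Rightarrow> ('k + 'f \<Rightarrow> 'v) \<Rightarrow> 'v \<Rightarrow> 'v \<Rightarrow> ('k + 'f \<Rightarrow> real)
   \<Rightarrow> (real^'k) set \<Rightarrow> bool" where
  "reaction_set tail head orig dst c W \<longleftrightarrow>
     (\<exists>F. F face_of epi_g tail head orig dst c \<and> (0, 1) \<notin> aff_direction F \<and> W = fst ` F)"

definition strongly_bilevel_feasible ::
  "('k::finite + 'f::finite \<Rightarrow> 'v::finite) \<Rightarrow> ('k + 'f \<Rightarrow> 'v) \<Rightarrow> 'v \<Rightarrow> 'v \<Rightarrow> ('k + 'f \<Rightarrow> real)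
   \<Rightarrow> real^'k \<Rightarrow> bool" where
  "strongly_bilevel_feasible tail head orig dst c w \<longleftrightarrow>
     nonneg_vec w \<and> reaction_set tail head orig dst c {w}"

definition lower_feasible ::
  "('k::finite + 'f::finite \<Rightarrow> 'v::finite) \<Rightarrow> ('k + 'f \<Rightarrow> 'v) \<Rightarrow> 'v \<Rightarrow> 'v
   \<Rightarrow> ((real^'k) \<times> ('k + 'f \<Rightarrow> real)) set" where
  "lower_feasible tail head orig dst =
     {(w, x). x \<in> Xset tail head orig dst \<and> (\<forall>k. x (Inl k) \<le> w $ k) \<and> nonneg_vec w}"

definition bW ::
  "('k::finite + 'f::finite \<Rightarrow> 'v::finite) \<Rightarrow> ('k + 'f \<Rightarrow> 'v) \<Rightarrow> 'v \<Rightarrow> 'v \<Rightarrow> ('k + 'f \<Rightarrow> real)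
   \<Rightarrow> real^'k \<Rightarrow> (real^'k) set" where
  "bW tail head orig dst c t =
     {w. \<exists>x. (w, x) \<in> lower_feasible tail head orig dst \<and>
            (\<forall>(w', x') \<in> lower_feasible tail head orig dst.
                arc_cost c x + t \<bullet> w \<le> arc_cost c x' + t \<bullet> w')}"

definition bW_set ::
  "('k::finite + 'f::finite \<Rightarrow> 'v::finite) \<Rightarrow> ('k + 'f \<Rightarrow> 'v) \<Rightarrow> 'v \<Rightarrow> 'v \<Rightarrow> ('k + 'f \<Rightarrow> real)
   \<Rightarrow> (real^'k) set \<Rightarrow> (real^'k) set" where
  "bW_set tail head orig dst c T = (\<Inter>t\<in>T. bW tail head orig dst c t)"

definition dual_feasible ::
  "('k::finite + 'f::finite \<Rightarrow> 'v::finite) \<Rightarrow> ('k + 'f \<Rightarrow> 'v) \<Rightarrow> ('k + 'f \<Rightarrow> real)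
   \<Rightarrow> ((real^'k) \<times> ('v \<Rightarrow> real)) set" where
  "dual_feasible tail head c =
     {(t, y). (\<forall>e. y (tail e) - y (head e) - ext_toll t e \<le> c e) \<and> nonneg_vec t}"

definition dual_obj :: "'v::finite \<Rightarrow> 'v \<Rightarrow> real^'k \<Rightarrow> real^'k \<Rightarrow> ('v \<Rightarrow> real) \<Rightarrow> real" where
  "dual_obj orig dst w t y = (\<Sum>i\<in>UNIV. node_supply orig dst i * y i) - w \<bullet> t"

definition bT ::
  "('k::finite + 'f::finite \<Rightarrow> 'v::finite) \<Rightarrow> ('k + 'f \<Rightarrow> 'v) \<Rightarrow> 'v \<Rightarrow> 'v \<Rightarrow> ('k + 'f \<Rightarrow> real)
   \<Rightarrow> real^'k \<Rightarrow> (real^'k) set" where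
  "bT tail head orig dst c w =
     {t. \<exists>y. (t, y) \<in> dual_feasible tail head c \<and>
            (\<forall>(t', y') \<in> dual_feasible tail head c.
                dual_obj orig dst w t' y' \<le> dual_obj orig dst w t y)}"

end

theory Submission
  imports Defs
begin


lemma sum_UNIV_sum: "(\<Sum>i\<in>(UNIV::('a::finite + 'b::finite) set). f i) = (\<Sum>a\<in>UNIV. f (Inl a)) + (\<Sum>b\<in>UNIV. f (Inr b))"
  by (subst UNIV_Plus_UNIV[symmetric], subst sum.Plus) (auto simp: comp_def)

lemma all_sum_split: "(\<forall>x::'a+'b. P x) \<longleftrightarrow> (\<forall>a. P (Inl a)) \<and> (\<forall>b. P (Inr b))"
  by (metis sum.exhaust)

lemma convex_cone_hull_sum:
  assumes "finite I" "\<And>i. i \<in> I \<Longrightarrow> f i \<in> convex_cone hull S"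
  shows "sum f I \<in> convex_cone hull S"
  using assms by (induction I rule: finite_induct)
    (auto intro: convex_cone_hull_add convex_cone_hull_contains_0)

lemma cone_sep:
  fixes p :: "'i \<Rightarrow> 'a::euclidean_space"
  assumes fin: "finite I"
    and nin: "\<not> (\<exists>la mu. (\<forall>i\<in>I. 0 \<le> la i) \<and> 0 \<le> mu \<and> z = (\<Sum>i\<in>I. la i *\<^sub>R p i)
                  \<and> \<zeta> = (\<Sum>i\<in>I. la i * b i) - mu)"
  shows "\<exists>y s. s \<le> 0 \<and> (\<forall>i\<in>I. 0 \<le> y \<bullet> p i + s * b i) \<and> y \<bullet> z + s * \<zeta> < 0"
proof -
  define K where "K = {((\<Sum>i\<in>I. la i *\<^sub>R p i), (\<Sum>i\<in>I. la i * b i) - mu) | la mu.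
                        (\<forall>i\<in>I. 0 \<le> la i) \<and> 0 \<le> (mu::real)}"
  define S where "S = insert (0, -1) ((\<lambda>i. (p i, b i)) ` I)"
  have KS: "K = convex_cone hull S"
  proof
    show "K \<subseteq> convex_cone hull S"
    proof
      fix k assume "k \<in> K"
      then obtain la mu where l: "\<forall>i\<in>I. 0 \<le> la i" "0 \<le> (mu::real)"
        and k: "k = ((\<Sum>i\<in>I. la i *\<^sub>R p i), (\<Sum>i\<in>I. la i * b i) - mu)"
        unfolding K_def by blast
      have "k = (\<Sum>i\<in>I. la i *\<^sub>R (p i, b i)) + mu *\<^sub>R (0, -1)"
        unfolding k by (simp add: prod_eq_iff fst_sum snd_sum)
      also have "\<dots> \<in> convex_cone hull S"
        by (intro convex_cone_hull_add convex_cone_hull_sum fin convex_cone_hull_mul l[rule_format] hull_inc)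
           (auto simp: S_def l)
      finally show "k \<in> convex_cone hull S" .
    qed
  next
    show "convex_cone hull S \<subseteq> K"
    proof (rule hull_minimal)
      show "S \<subseteq> K"
      proof
        fix q assume "q \<in> S"
        then consider "q = (0, -1)" | j where "j \<in> I" "q = (p j, b j)" unfolding S_def by blast
        then show "q \<in> K"
        proof cases
          case 1
          then show ?thesis unfolding K_def
            by (intro CollectI exI[of _ "\<lambda>i. 0"] exI[of _ 1]) auto
        next
          case 2
          have e1: "(\<Sum>i\<in>I. (if i = j then 1 else 0) *\<^sub>R p i) = p j"
            by (subst sum.cong[OF refl, of _ _ "\<lambda>i. if i = j then p i else 0"]) (auto simp: fin 2)
          have e2: "(\<Sum>i\<in>I. (if i = j then 1 else 0) * b i) = b j"
            by (subst sum.cong[OF refl, of _ _ "\<lambda>i. if i = j then b i else 0"]) (auto simp: fin 2)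
          show ?thesis unfolding K_def
            by (intro CollectI exI[of _ "\<lambda>i. if i = j then 1 else 0"] exI[of _ 0])
              (auto simp: e1 e2 2)
        qed
      qed
      show "convex_cone K"
        unfolding convex_cone_iff
      proof (intro conjI ballI allI impI)
        show "0 \<in> K" unfolding K_def
          by (intro CollectI exI[of _ "\<lambda>i. 0"] exI[of _ 0]) (auto simp: zero_prod_def)
      next
        fix x y assume "x \<in> K" "y \<in> K"
        then obtain la1 mu1 la2 mu2 where "\<forall>i\<in>I. 0 \<le> la1 i" "0 \<le> (mu1::real)"
          "x = ((\<Sum>i\<in>I. la1 i *\<^sub>R p i), (\<Sum>i\<in>I. la1 i * b i) - mu1)"
          "\<forall>i\<in>I. 0 \<le> la2 i" "0 \<le> (mu2::real)"
          "y = ((\<Sum>i\<in>I. la2 i *\<^sub>R p i), (\<Sum>i\<in>I. la2 i * b i) - mu2)"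
          unfolding K_def by blast
        then show "x + y \<in> K" unfolding K_def
          by (intro CollectI exI[of _ "\<lambda>i. la1 i + la2 i"] exI[of _ "mu1 + mu2"])
            (auto simp: scaleR_add_left sum.distrib distrib_right)
      next
        fix x and r :: real assume "x \<in> K" "0 \<le> r"
        then obtain la1 mu1 where "\<forall>i\<in>I. 0 \<le> la1 i" "0 \<le> (mu1::real)"
          "x = ((\<Sum>i\<in>I. la1 i *\<^sub>R p i), (\<Sum>i\<in>I. la1 i * b i) - mu1)"
          unfolding K_def by blast
        with \<open>0 \<le> r\<close> show "r *\<^sub>R x \<in> K" unfolding K_def
          by (intro CollectI exI[of _ "\<lambda>i. r * la1 i"] exI[of _ "r * mu1"])
            (auto simp: scaleR_sum_right sum_distrib_left right_diff_distrib mult.assoc)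
      qed
    qed
  qed
  have "finite S" unfolding S_def using fin by simp
  then have clK: "closed K" and cvK: "convex K"
    unfolding KS by (auto simp: closed_convex_cone_hull convex_convex_cone_hull)
  have coneK: "\<And>x r. x \<in> K \<Longrightarrow> 0 \<le> r \<Longrightarrow> r *\<^sub>R x \<in> K"
    unfolding KS by (simp add: convex_cone_hull_mul)
  have "(z, \<zeta>) \<notin> K" using nin unfolding K_def by blast
  from separating_hyperplane_closed_point[OF cvK clK this]
  obtain a \<beta> where a1: "a \<bullet> (z, \<zeta>) < \<beta>" and a2: "\<forall>x\<in>K. \<beta> < a \<bullet> x" by blast
  have "0 \<in> K" unfolding KS by (rule convex_cone_hull_contains_0)
  with a2 have b0: "\<beta> < 0" by force
  have apos: "0 \<le> a \<bullet> x" if "x \<in> K" for x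
  proof (rule ccontr)
    assume "\<not> 0 \<le> a \<bullet> x"
    then have neg: "a \<bullet> x < 0" by simp
    define r where "r = \<beta> / (a \<bullet> x)"
    have "0 \<le> r" unfolding r_def using neg b0 by (simp add: divide_nonpos_neg)
    then have "r *\<^sub>R x \<in> K" by (rule coneK[OF that])
    with a2 have "\<beta> < a \<bullet> (r *\<^sub>R x)" by blast
    also have "a \<bullet> (r *\<^sub>R x) = \<beta>" unfolding r_def using neg by simp
    finally show False by simp
  qed
  obtain y s where a: "a = (y, s)" by (cases a)
  have "(0, -1) \<in> K" unfolding KS S_def by (rule hull_inc) simp
  from apos[OF this] have "s \<le> 0" by (simp add: a)
  moreover have "0 \<le> y \<bullet> p i + s * b i" if "i \<in> I" for i
  proof -
    have "(p i, b i) \<in> K" unfolding KS S_def by (rule hull_inc) (use that in simp)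
    from apos[OF this] show ?thesis by (simp add: a mult.commute)
  qed
  moreover have "y \<bullet> z + s * \<zeta> < 0" using a1 b0 by (simp add: a mult.commute)
  ultimately show ?thesis by blast
qed

lemma sum_option_Some:
  assumes "finite I"
  shows "(\<Sum>i\<in>insert None (Some ` I). f i) = f None + (\<Sum>i\<in>I. f (Some i))"
  using assms by (simp add: sum.reindex)

lemma FK2:
  fixes p :: "'i \<Rightarrow> 'a::euclidean_space"
  assumes fin: "finite I"
    and inf: "\<not> (\<exists>x. (\<forall>i\<in>I. b i \<le> p i \<bullet> x) \<and> b0 \<le> p0 \<bullet> x)"
  shows "\<exists>la l0. 0 \<le> l0 \<and> (\<forall>i\<in>I. 0 \<le> la i) \<and> l0 *\<^sub>R p0 + (\<Sum>i\<in>I. la i *\<^sub>R p i) = 0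
            \<and> 1 \<le> l0 * b0 + (\<Sum>i\<in>I. la i * b i)"
proof -
  define I' where "I' = insert None (Some ` I)"
  define p' where "p' = (\<lambda>i. case i of None \<Rightarrow> p0 | Some j \<Rightarrow> p j)"
  define b' where "b' = (\<lambda>i. case i of None \<Rightarrow> b0 | Some j \<Rightarrow> b j)"
  have fin': "finite I'" unfolding I'_def using fin by simp
  have "\<exists>la mu. (\<forall>i\<in>I'. 0 \<le> la i) \<and> 0 \<le> mu \<and> 0 = (\<Sum>i\<in>I'. la i *\<^sub>R p' i)
                  \<and> 1 = (\<Sum>i\<in>I'. la i * b' i) - mu"
  proof (rule ccontr)
    assume "\<not> ?thesis"
    from cone_sep[OF fin' this] obtain y s where ys: "s \<le> 0" "\<forall>i\<in>I'. 0 \<le> y \<bullet> p' i + s * b' i"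
      "y \<bullet> 0 + s * 1 < 0" by blast
    then have sneg: "s < 0" by simp
    define x where "x = (1 / (- s)) *\<^sub>R y"
    have key: "\<And>i. i \<in> I' \<Longrightarrow> b' i \<le> p' i \<bullet> x"
    proof -
      fix i assume "i \<in> I'"
      have "0 \<le> y \<bullet> p' i + s * b' i" using ys(2) \<open>i \<in> I'\<close> by blast
      then have "- s * b' i \<le> y \<bullet> p' i" by simp
      then have "b' i \<le> (y \<bullet> p' i) / (- s)" using sneg by (simp add: field_simps)
      then show "b' i \<le> p' i \<bullet> x" unfolding x_def by (simp add: inner_commute)
    qed
    have "\<forall>i\<in>I. b i \<le> p i \<bullet> x"
      using key by (force simp: I'_def p'_def b'_def)
    moreover have "b0 \<le> p0 \<bullet> x" using key[of None] by (simp add: I'_def p'_def b'_def)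
    ultimately show False using inf by blast
  qed
  then obtain la mu where l: "\<forall>i\<in>I'. 0 \<le> la i" "0 \<le> mu" "0 = (\<Sum>i\<in>I'. la i *\<^sub>R p' i)"
    "1 = (\<Sum>i\<in>I'. la i * b' i) - mu" by blast
  have s1: "(\<Sum>i\<in>I'. la i *\<^sub>R p' i) = la None *\<^sub>R p0 + (\<Sum>i\<in>I. la (Some i) *\<^sub>R p i)"
    unfolding I'_def by (subst sum_option_Some[OF fin]) (simp add: p'_def)
  have s2: "(\<Sum>i\<in>I'. la i * b' i) = la None * b0 + (\<Sum>i\<in>I. la (Some i) * b i)"
    unfolding I'_def by (subst sum_option_Some[OF fin]) (simp add: b'_def)
  show ?thesis
    apply (rule exI[of _ "\<lambda>i. la (Some i)"], rule exI[of _ "la None"])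
    using l unfolding s1 s2 by (auto simp: I'_def)
qed

lemma LPD_e:
  fixes p :: "'i \<Rightarrow> 'a::euclidean_space"
  assumes fin: "finite I"
    and feas: "\<exists>x. \<forall>i\<in>I. b i \<le> p i \<bullet> x"
    and bnd: "\<forall>x. (\<forall>i\<in>I. b i \<le> p i \<bullet> x) \<longrightarrow> m \<le> cc \<bullet> x"
  shows "\<exists>x la. (\<forall>i\<in>I. b i \<le> p i \<bullet> x) \<and> (\<forall>i\<in>I. 0 \<le> la i)
             \<and> cc = (\<Sum>i\<in>I. la i *\<^sub>R p i) \<and> cc \<bullet> x = (\<Sum>i\<in>I. la i * b i)"
proof -
  define F where "F = {x. \<forall>i\<in>I. b i \<le> p i \<bullet> x}"
  define v where "v = Inf ((\<lambda>x. cc \<bullet> x) ` F)"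
  obtain x0 where x0: "x0 \<in> F" using feas unfolding F_def by blast
  have bdd: "bdd_below ((\<lambda>x. cc \<bullet> x) ` F)"
    using bnd unfolding F_def bdd_below_def by blast
  have vle: "v \<le> cc \<bullet> x" if "x \<in> F" for x
    unfolding v_def using bdd that by (simp add: cInf_lower)
  have vge: "r \<le> v" if "\<And>x. x \<in> F \<Longrightarrow> r \<le> cc \<bullet> x" for r
    unfolding v_def using x0 that by (auto intro: cInf_greatest)
  have ineq: "(\<Sum>i\<in>I. la i * b i) \<le> (\<Sum>i\<in>I. la i *\<^sub>R p i) \<bullet> x"
    if "x \<in> F" "\<forall>i\<in>I. 0 \<le> la i" for x la
    unfolding inner_sum_left inner_scaleR_left
    using that unfolding F_def by (intro sum_mono mult_left_mono) auto
  have "\<exists>la mu. (\<forall>i\<in>I. 0 \<le> la i) \<and> 0 \<le> mu \<and> cc = (\<Sum>i\<in>I. la i *\<^sub>R p i)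
                  \<and> v = (\<Sum>i\<in>I. la i * b i) - mu"
  proof (rule ccontr)
    assume "\<not> ?thesis"
    from cone_sep[OF fin this] obtain y s where ys: "s \<le> 0" "\<forall>i\<in>I. 0 \<le> y \<bullet> p i + s * b i"
      "y \<bullet> cc + s * v < 0" by blast
    show False
    proof (cases "s = 0")
      case True
      with ys have yp: "\<forall>i\<in>I. 0 \<le> y \<bullet> p i" and yc: "y \<bullet> cc < 0" by auto
      define M where "M = (cc \<bullet> x0 - m + 1) / (- (y \<bullet> cc))"
      have "m \<le> cc \<bullet> x0" using bnd x0 unfolding F_def by blast
      then have M0: "0 \<le> M" unfolding M_def using yc by (intro divide_nonneg_pos) auto
      have "\<forall>i\<in>I. b i \<le> p i \<bullet> (x0 + M *\<^sub>R y)"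
      proof
        fix i assume "i \<in> I"
        then have "b i \<le> p i \<bullet> x0" "0 \<le> M * (y \<bullet> p i)" using x0 yp M0 unfolding F_def by auto
        then show "b i \<le> p i \<bullet> (x0 + M *\<^sub>R y)" by (simp add: inner_add_right inner_commute[of y "p i"])
      qed
      then have "x0 + M *\<^sub>R y \<in> F" unfolding F_def by simp
      with bnd have "m \<le> cc \<bullet> (x0 + M *\<^sub>R y)" unfolding F_def by blast
      also have "cc \<bullet> (x0 + M *\<^sub>R y) = cc \<bullet> x0 + M * (y \<bullet> cc)"
        by (simp add: inner_add_right inner_commute)
      also have "M * (y \<bullet> cc) = - (cc \<bullet> x0 - m + 1)" unfolding M_def using yc by simp
      finally show False by simp
    next
      case False
      with ys have sneg: "s < 0" by simp
      define x where "x = (1 / (- s)) *\<^sub>R y"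
      have "\<forall>i\<in>I. b i \<le> p i \<bullet> x"
      proof
        fix i assume "i \<in> I"
        have "0 \<le> y \<bullet> p i + s * b i" using ys(2) \<open>i \<in> I\<close> by blast
        then have "- s * b i \<le> y \<bullet> p i" by simp
        then have "b i \<le> (y \<bullet> p i) / (- s)" using sneg by (simp add: field_simps)
        then show "b i \<le> p i \<bullet> x" unfolding x_def by (simp add: inner_commute)
      qed
      then have "x \<in> F" unfolding F_def by simp
      from vle[OF this] have "v \<le> (y \<bullet> cc) / (- s)" unfolding x_def by (simp add: inner_commute)
      then have "v * (- s) \<le> y \<bullet> cc" using sneg by (simp add: field_simps)
      with ys(3) show False by (simp add: algebra_simps)
    qed
  qed
  then obtain la mu where la: "\<forall>i\<in>I. 0 \<le> la i" "0 \<le> mu" "cc = (\<Sum>i\<in>I. la i *\<^sub>R p i)"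
    "v = (\<Sum>i\<in>I. la i * b i) - mu" by blast
  have "\<exists>x. (\<forall>i\<in>I. b i \<le> p i \<bullet> x) \<and> - v \<le> (- cc) \<bullet> x"
  proof (rule ccontr)
    assume "\<not> ?thesis"
    from FK2[OF fin this] obtain ka k0 where k: "0 \<le> k0" "\<forall>i\<in>I. 0 \<le> ka i"
      "k0 *\<^sub>R (- cc) + (\<Sum>i\<in>I. ka i *\<^sub>R p i) = 0" "1 \<le> k0 * (- v) + (\<Sum>i\<in>I. ka i * b i)"
      by blast
    show False
    proof (cases "k0 = 0")
      case True
      with k have "(\<Sum>i\<in>I. ka i *\<^sub>R p i) = 0" "1 \<le> (\<Sum>i\<in>I. ka i * b i)" by auto
      with ineq[OF x0 k(2)] show False by simp
    next
      case False
      with k have k0: "0 < k0" by simp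
      define kb where "kb = (\<lambda>i. ka i / k0)"
      have kb0: "\<forall>i\<in>I. 0 \<le> kb i" using k k0 unfolding kb_def by simp
      have "k0 *\<^sub>R cc = (\<Sum>i\<in>I. ka i *\<^sub>R p i)" using k(3) by (simp add: algebra_simps)
      then have "(1/k0) *\<^sub>R (k0 *\<^sub>R cc) = (1/k0) *\<^sub>R (\<Sum>i\<in>I. ka i *\<^sub>R p i)" by simp
      then have ccb: "cc = (\<Sum>i\<in>I. kb i *\<^sub>R p i)" using k0
        by (simp add: kb_def scaleR_sum_right divide_inverse mult.commute)
      have "(\<Sum>i\<in>I. kb i * b i) = (\<Sum>i\<in>I. ka i * b i) / k0"
        unfolding kb_def by (simp add: sum_divide_distrib)
      moreover have "k0 * v + 1 \<le> (\<Sum>i\<in>I. ka i * b i)" using k(4) by simp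
      ultimately have "v + 1 / k0 \<le> (\<Sum>i\<in>I. kb i * b i)" using k0
        by (simp add: field_simps)
      moreover have "(\<Sum>i\<in>I. kb i * b i) \<le> v"
        by (rule vge) (use ineq kb0 ccb in metis)
      moreover have "0 < 1 / k0" using k0 by simp
      ultimately show False by linarith
    qed
  qed
  then obtain x where x: "\<forall>i\<in>I. b i \<le> p i \<bullet> x" "cc \<bullet> x \<le> v" by auto
  have "x \<in> F" using x unfolding F_def by blast
  from ineq[OF this la(1)] la x have "cc \<bullet> x = (\<Sum>i\<in>I. la i * b i)" by simp
  with x la show ?thesis by blast
qed

lemma LP_matrix:
  fixes A :: "'i::finite \<Rightarrow> 'j::finite \<Rightarrow> real" and b :: "'i \<Rightarrow> real" and cc :: "'j \<Rightarrow> real"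
  assumes feas: "\<exists>x. \<forall>i. b i \<le> (\<Sum>j\<in>UNIV. A i j * x j)"
    and bnd: "\<forall>x. (\<forall>i. b i \<le> (\<Sum>j\<in>UNIV. A i j * x j)) \<longrightarrow> m \<le> (\<Sum>j\<in>UNIV. cc j * x j)"
  shows "\<exists>x la. (\<forall>i. b i \<le> (\<Sum>j\<in>UNIV. A i j * x j)) \<and> (\<forall>i. 0 \<le> la i)
          \<and> (\<forall>j. cc j = (\<Sum>i\<in>UNIV. la i * A i j))
          \<and> (\<Sum>j\<in>UNIV. cc j * x j) = (\<Sum>i\<in>UNIV. la i * b i)"
proof -
  define p where "p = (\<lambda>i. (\<chi> j. A i j) :: real^'j)"
  define C where "C = ((\<chi> j. cc j) :: real^'j)"
  have pin: "p i \<bullet> X = (\<Sum>j\<in>UNIV. A i j * X $ j)" for i X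
    unfolding p_def inner_vec_def by simp
  have cin: "C \<bullet> X = (\<Sum>j\<in>UNIV. cc j * X $ j)" for X
    unfolding C_def inner_vec_def by simp
  have feas': "\<exists>X. \<forall>i\<in>UNIV. b i \<le> p i \<bullet> X"
  proof -
    obtain x where "\<forall>i. b i \<le> (\<Sum>j\<in>UNIV. A i j * x j)" using feas by blast
    then show ?thesis by (intro exI[of _ "\<chi> j. x j"]) (simp add: pin)
  qed
  have bnd': "\<forall>X. (\<forall>i\<in>UNIV. b i \<le> p i \<bullet> X) \<longrightarrow> m \<le> C \<bullet> X"
  proof (intro allI impI)
    fix X :: "real^'j" assume "\<forall>i\<in>UNIV. b i \<le> p i \<bullet> X"
    then have "\<forall>i. b i \<le> (\<Sum>j\<in>UNIV. A i j * (\<lambda>j. X $ j) j)" by (simp add: pin)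
    with bnd have "m \<le> (\<Sum>j\<in>UNIV. cc j * (\<lambda>j. X $ j) j)" by blast
    then show "m \<le> C \<bullet> X" by (simp add: cin)
  qed
  from LPD_e[OF finite feas' bnd'] obtain X la where
    r: "\<forall>i\<in>UNIV. b i \<le> p i \<bullet> X" "\<forall>i\<in>UNIV. 0 \<le> la i"
       "C = (\<Sum>i\<in>UNIV. la i *\<^sub>R p i)" "C \<bullet> X = (\<Sum>i\<in>UNIV. la i * b i)" by blast
  have "cc j = (\<Sum>i\<in>UNIV. la i * A i j)" for j
  proof -
    have "C $ j = (\<Sum>i\<in>UNIV. la i *\<^sub>R p i) $ j" using r(3) by simp
    then show ?thesis by (simp add: C_def p_def)
  qed
  moreover have "(\<Sum>j\<in>UNIV. cc j * X $ j) = (\<Sum>i\<in>UNIV. la i * b i)"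
    using r(4) by (simp add: cin)
  ultimately show ?thesis using r(1,2)
    by (intro exI[of _ "\<lambda>j. X $ j"] exI[of _ la]) (simp add: pin)
qed



lemma delta_sum: fixes x :: "'e::finite \<Rightarrow> real" shows "(\<Sum>e\<in>UNIV. (if e = a then r else 0) * x e) = r * x a"
proof -
  have "(\<Sum>e\<in>UNIV. (if e = a then r else 0) * x e) = (\<Sum>e\<in>UNIV. if e = a then r * x e else 0)"
    by (rule sum.cong) auto
  also have "\<dots> = r * x a" by (subst sum.delta) auto
  finally show ?thesis .
qed

lemma ereal_minus_le_aux: "(a::ereal) \<le> ereal r \<Longrightarrow> a - ereal s \<le> ereal (r - s)"
  by (cases a) auto

lemma ereal_minus_ge_aux: "ereal r \<le> (a::ereal) \<Longrightarrow> ereal (r - s) \<le> a - ereal s"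
  by (cases a) auto

definition rw :: "('e \<Rightarrow> 'v) \<Rightarrow> ('e \<Rightarrow> 'v) \<Rightarrow> 'v \<Rightarrow> 'e \<Rightarrow> real" where
  "rw ta hh i e = (if ta e = i then 1 else 0) - (if hh e = i then 1 else 0)"

lemma rw_sum:
  fixes x :: "'e::finite \<Rightarrow> real"
  shows "(\<Sum>e\<in>UNIV. rw ta hh i e * x e) = (\<Sum>e\<in>{e. ta e = i}. x e) - (\<Sum>e\<in>{e. hh e = i}. x e)"
proof -
  have a: "(\<Sum>e\<in>UNIV. (if P e then 1 else 0) * x e) = (\<Sum>e\<in>{e. P e}. x e)" for P :: "'e \<Rightarrow> bool"
  proof -
    have "(\<Sum>e\<in>UNIV. (if P e then 1 else 0) * x e) = (\<Sum>e\<in>UNIV. if P e then x e else 0)"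
      by (rule sum.cong) auto
    also have "\<dots> = (\<Sum>e\<in>{e\<in>UNIV. P e}. x e)" by (rule sum.inter_filter[symmetric]) simp
    finally show ?thesis by simp
  qed
  show ?thesis unfolding rw_def left_diff_distrib sum_subtractf a ..
qed

lemma rw_dual:
  fixes y :: "'v::finite \<Rightarrow> real"
  shows "(\<Sum>i\<in>UNIV. y i * rw ta hh i e) = y (ta e) - y (hh e)"
proof -
  have "(\<Sum>i\<in>UNIV. y i * rw ta hh i e) = (\<Sum>i\<in>UNIV. if ta e = i then y i else 0) - (\<Sum>i\<in>UNIV. if hh e = i then y i else 0)"
    unfolding rw_def right_diff_distrib sum_subtractf by (intro arg_cong2[where f="(-)"] sum.cong) auto
  then show ?thesis by simp
qed

lemma fc_rw: "flow_conservation tail head orig dst x \<longleftrightarrow>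
   (\<forall>i. (\<Sum>e\<in>UNIV. rw tail head i e * x e) = node_supply orig dst i)"
  unfolding flow_conservation_def rw_sum ..

lemma walk:
  fixes tail head :: "'k::finite + 'f::finite \<Rightarrow> 'v::finite"
  assumes "(u, v) \<in> {(tail (Inr a), head (Inr a)) | a. True}\<^sup>*"
  shows "\<exists>x. (\<forall>e. 0 \<le> x e) \<and> (\<forall>k. x (Inl k) = 0) \<and>
     (\<forall>i. (\<Sum>e\<in>UNIV. rw tail head i e * x e) = (if i = u then 1 else 0) - (if i = v then 1 else 0))"
  using assms
proof (induction rule: rtrancl_induct)
  case base
  show ?case by (intro exI[of _ "\<lambda>e. 0"]) simp
next
  case (step m v)
  from step.IH obtain x where x: "\<forall>e. 0 \<le> x e" "\<forall>k. x (Inl k) = 0"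
    "\<forall>i. (\<Sum>e\<in>UNIV. rw tail head i e * x e) = (if i = u then 1 else 0) - (if i = m then 1 else 0)"
    by blast
  from step.hyps(2) obtain a where a: "m = tail (Inr a)" "v = head (Inr a)" by blast
  define x' where "x' = (\<lambda>e. x e + (if e = Inr a then 1 else 0))"
  have "(\<Sum>e\<in>UNIV. rw tail head i e * x' e) = (if i = u then 1 else 0) - (if i = v then 1 else 0)" for i
  proof -
    have "(\<Sum>e\<in>UNIV. rw tail head i e * x' e) = (\<Sum>e\<in>UNIV. rw tail head i e * x e)
        + (\<Sum>e\<in>UNIV. (if e = Inr a then 1 else 0) * rw tail head i e)"
      unfolding x'_def distrib_left sum.distrib by (simp add: mult.commute)
    also have "\<dots> = (if i = u then 1 else 0) - (if i = m then 1 else 0) + rw tail head i (Inr a)"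
      using x(3) delta_sum[of "Inr a" 1 "rw tail head i"] by simp
    finally show ?thesis using a unfolding rw_def by auto
  qed
  moreover have "\<forall>e. 0 \<le> x' e" "\<forall>k. x' (Inl k) = 0" using x unfolding x'_def by auto
  ultimately show ?case by blast
qed

locale net =
  fixes tail head :: "'k::finite + 'f::finite \<Rightarrow> 'v::finite"
    and c :: "'k + 'f \<Rightarrow> real"
    and orig dst :: 'v
  assumes c_nonneg: "\<forall>e. 0 \<le> c e"
    and od_distinct: "orig \<noteq> dst"
    and toll_free_path: "(orig, dst) \<in> {(tail (Inr a), head (Inr a)) | a. True}\<^sup>*"
begin

abbreviation "XS \<equiv> Xset tail head orig dst"
abbreviation "DF \<equiv> dual_feasible tail head c"
abbreviation "ns \<equiv> node_supply orig dst"
abbreviation "cap x w \<equiv> (\<forall>k. x (Inl k) \<le> w $ k)"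

lemma XS_iff: "x \<in> XS \<longleftrightarrow> (\<forall>i. (\<Sum>e\<in>UNIV. rw tail head i e * x e) = ns i) \<and> (\<forall>e. 0 \<le> x e)"
  unfolding Xset_def fc_rw by simp

lemma x0_exists: "\<exists>x. x \<in> XS \<and> (\<forall>k. x (Inl k) = 0)"
proof -
  from walk[OF toll_free_path] obtain x where x: "\<forall>e. 0 \<le> x e" "\<forall>k. x (Inl k) = 0"
    "\<forall>i. (\<Sum>e\<in>UNIV. rw tail head i e * x e) = (if i = orig then 1 else 0) - (if i = dst then 1 else 0)"
    by blast
  have nsd: "ns i = (if i = orig then 1 else 0) - (if i = dst then 1 else 0)" for i
    using od_distinct unfolding node_supply_def by auto
  have "x \<in> XS" unfolding XS_iff using x(1) x(3) nsd by simp
  with x(2) show ?thesis by blast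
qed

lemma toll_sum: "(\<Sum>e\<in>UNIV. x e * ext_toll t e) = t \<bullet> restrA1 (x :: 'k + 'f \<Rightarrow> real)"
  unfolding sum_UNIV_sum by (simp add: ext_toll_def inner_vec_def restrA1_def mult.commute)

lemma arc_cost_nonneg: "x \<in> XS \<Longrightarrow> 0 \<le> arc_cost c x"
  unfolding arc_cost_def Xset_def using c_nonneg by (auto intro: sum_nonneg)

lemma toll_nonneg: "x \<in> XS \<Longrightarrow> nonneg_vec t \<Longrightarrow> 0 \<le> t \<bullet> restrA1 x"
  unfolding Xset_def nonneg_vec_def inner_vec_def restrA1_def by (auto intro: sum_nonneg)

lemma WD0:
  assumes x: "x \<in> XS" and ty: "(t, y) \<in> DF"
  shows "(\<Sum>i\<in>UNIV. ns i * y i) \<le> arc_cost c x + t \<bullet> restrA1 x"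
proof -
  have fc: "\<forall>i. (\<Sum>e\<in>UNIV. rw tail head i e * x e) = ns i" and xp: "\<forall>e. 0 \<le> x e"
    using x unfolding XS_iff by auto
  have "(\<Sum>i\<in>UNIV. ns i * y i) = (\<Sum>i\<in>UNIV. (\<Sum>e\<in>UNIV. rw tail head i e * x e) * y i)"
    using fc by simp
  also have "\<dots> = (\<Sum>e\<in>UNIV. x e * (\<Sum>i\<in>UNIV. y i * rw tail head i e))"
  proof -
    have "(\<Sum>i\<in>UNIV. (\<Sum>e\<in>UNIV. rw tail head i e * x e) * y i)
        = (\<Sum>i\<in>UNIV. \<Sum>e\<in>UNIV. x e * (y i * rw tail head i e))"
      unfolding sum_distrib_right by (intro sum.cong refl) (simp add: mult_ac)
    also have "\<dots> = (\<Sum>e\<in>UNIV. \<Sum>i\<in>UNIV. x e * (y i * rw tail head i e))"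
      by (rule sum.swap)
    also have "\<dots> = (\<Sum>e\<in>UNIV. x e * (\<Sum>i\<in>UNIV. y i * rw tail head i e))"
      unfolding sum_distrib_left ..
    finally show ?thesis .
  qed
  also have "\<dots> = (\<Sum>e\<in>UNIV. x e * (y (tail e) - y (head e)))"
    by (simp add: rw_dual)
  also have "\<dots> \<le> (\<Sum>e\<in>UNIV. x e * (c e + ext_toll t e))"
    using ty xp unfolding dual_feasible_def
    by (intro sum_mono mult_left_mono) (auto simp: algebra_simps)
  also have "\<dots> = arc_cost c x + t \<bullet> restrA1 x"
    unfolding distrib_left sum.distrib toll_sum arc_cost_def by (simp add: mult.commute)
  finally show ?thesis .
qed

lemma WD:
  assumes x: "x \<in> XS" "cap x w" and ty: "(t, y) \<in> DF"
  shows "dual_obj orig dst w t y \<le> arc_cost c x"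
proof -
  have "t \<bullet> restrA1 x \<le> t \<bullet> w"
    using ty x(2) unfolding dual_feasible_def nonneg_vec_def inner_vec_def restrA1_def
    by (auto intro!: sum_mono mult_left_mono)
  with WD0[OF x(1) ty] show ?thesis unfolding dual_obj_def by (simp add: inner_commute)
qed

end



lemma sum4: fixes f :: "'a::finite + 'b::finite + 'c::finite + 'd::finite \<Rightarrow> real"
  shows "sum f UNIV = (\<Sum>a\<in>UNIV. f (Inl a)) + (\<Sum>a\<in>UNIV. f (Inr (Inl a)))
     + (\<Sum>a\<in>UNIV. f (Inr (Inr (Inl a)))) + (\<Sum>a\<in>UNIV. f (Inr (Inr (Inr a))))"
  by (simp add: sum_UNIV_sum add.assoc)

lemma delta_sum': fixes x :: "'e::finite \<Rightarrow> real" shows "(\<Sum>e\<in>UNIV. x e * (if a = e then r else 0)) = x a * r"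
proof -
  have "(\<Sum>e\<in>UNIV. x e * (if a = e then r else 0)) = (\<Sum>e\<in>UNIV. if a = e then x e * r else 0)"
    by (rule sum.cong) auto
  also have "\<dots> = x a * r" by (subst sum.delta') auto
  finally show ?thesis .
qed

lemma toll_col: fixes la :: "'k::finite \<Rightarrow> real"
  shows "(\<Sum>k\<in>UNIV. la k * (if e = Inl k then -1 else 0)) = - ext_toll (\<chi> k. la k) (e :: 'k + 'f)"
proof (cases e)
  case (Inl k0)
  have "(\<Sum>k\<in>UNIV. la k * (if e = Inl k then -1 else 0)) = (\<Sum>k\<in>UNIV. if k0 = k then - la k else 0)"
    using Inl by (intro sum.cong) auto
  also have "\<dots> = - la k0" by (subst sum.delta') auto
  finally show ?thesis using Inl by (simp add: ext_toll_def)
next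
  case (Inr f)
  then show ?thesis by (simp add: ext_toll_def)
qed

context net
begin

definition A2 :: "'v + 'v + ('k + 'f) + 'k \<Rightarrow> 'k + 'f \<Rightarrow> real" where
  "A2 = case_sum (\<lambda>i e. rw tail head i e) (case_sum (\<lambda>i e. - rw tail head i e)
          (case_sum (\<lambda>e' e. if e' = e then 1 else 0) (\<lambda>k e. if e = Inl k then -1 else 0)))"

definition b2 :: "real^'k \<Rightarrow> 'v + 'v + ('k + 'f) + 'k \<Rightarrow> real" where
  "b2 w = case_sum ns (case_sum (\<lambda>i. - ns i) (case_sum (\<lambda>e. 0) (\<lambda>k. - w $ k)))"

lemma feas2: "(\<forall>i. b2 w i \<le> (\<Sum>j\<in>UNIV. A2 i j * x j)) \<longleftrightarrow> x \<in> XS \<and> cap x w"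
proof -
  have neg: "(\<Sum>j\<in>UNIV. - rw tail head i j * x j) = - (\<Sum>j\<in>UNIV. rw tail head i j * x j)" for i
    by (simp add: sum_negf)
  have d1: "(\<Sum>j\<in>UNIV. (if e' = j then 1 else 0) * x j) = x e'" for e'
    using delta_sum'[of "\<lambda>j. x j" e' 1] by (simp add: mult.commute)
  have d2: "(\<Sum>j\<in>UNIV. (if j = Inl k then -1 else 0) * x j) = - x (Inl k)" for k
    using delta_sum[of "Inl k" "-1" x] by simp
  show ?thesis
    unfolding all_sum_split[where P="\<lambda>i. b2 w i \<le> (\<Sum>j\<in>UNIV. A2 i j * x j)"]
      all_sum_split[where P="\<lambda>i. b2 w (Inr i) \<le> (\<Sum>j\<in>UNIV. A2 (Inr i) j * x j)"]
      all_sum_split[where P="\<lambda>i. b2 w (Inr (Inr i)) \<le> (\<Sum>j\<in>UNIV. A2 (Inr (Inr i)) j * x j)"]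
    by (auto simp: A2_def b2_def sum_negf d1 d2 XS_iff intro: order.antisym)
qed

definition Gv :: "real^'k \<Rightarrow> real" where
  "Gv w = Inf {arc_cost c x | x. x \<in> XS \<and> cap x w}"

lemma Gv_lower: "x \<in> XS \<Longrightarrow> cap x w \<Longrightarrow> Gv w \<le> arc_cost c x"
  unfolding Gv_def
  by (rule cInf_lower) (auto intro!: bdd_belowI[of _ 0] arc_cost_nonneg)

lemma L2:
  assumes w: "nonneg_vec w"
  shows "\<exists>x t y. x \<in> XS \<and> cap x w \<and> (t, y) \<in> DF \<and> arc_cost c x = dual_obj orig dst w t y"
proof -
  obtain x0 where x0: "x0 \<in> XS" "\<forall>k. x0 (Inl k) = 0" using x0_exists by blast
  have "cap x0 w" using x0 w unfolding nonneg_vec_def by simp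
  then have feas: "\<exists>x. \<forall>i. b2 w i \<le> (\<Sum>j\<in>UNIV. A2 i j * x j)" using x0 feas2 by blast
  have bnd: "\<forall>x. (\<forall>i. b2 w i \<le> (\<Sum>j\<in>UNIV. A2 i j * x j)) \<longrightarrow> 0 \<le> (\<Sum>j\<in>UNIV. c j * x j)"
    using arc_cost_nonneg unfolding feas2 arc_cost_def by blast
  from LP_matrix[OF feas bnd] obtain x la where
    r: "\<forall>i. b2 w i \<le> (\<Sum>j\<in>UNIV. A2 i j * x j)" "\<forall>i. 0 \<le> la i"
       "\<forall>j. c j = (\<Sum>i\<in>UNIV. la i * A2 i j)" "(\<Sum>j\<in>UNIV. c j * x j) = (\<Sum>i\<in>UNIV. la i * b2 w i)"
    by blast
  define y where "y = (\<lambda>i. la (Inl i) - la (Inr (Inl i)))"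
  define t where "t = (\<chi> k. la (Inr (Inr (Inr k))))"
  have col: "c e = (y (tail e) - y (head e)) + la (Inr (Inr (Inl e))) - ext_toll t e" for e
  proof -
    have "c e = (\<Sum>i\<in>UNIV. la (Inl i) * rw tail head i e) + (\<Sum>i\<in>UNIV. la (Inr (Inl i)) * - rw tail head i e)
       + (\<Sum>e'\<in>UNIV. la (Inr (Inr (Inl e'))) * (if e' = e then 1 else 0))
       + (\<Sum>k\<in>UNIV. la (Inr (Inr (Inr k))) * (if e = Inl k then -1 else 0))"
      using r(3) by (simp add: sum4 A2_def)
    also have "(\<Sum>i\<in>UNIV. la (Inl i) * rw tail head i e) + (\<Sum>i\<in>UNIV. la (Inr (Inl i)) * - rw tail head i e)
        = (\<Sum>i\<in>UNIV. y i * rw tail head i e)"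
      unfolding y_def by (simp add: sum_negf[symmetric] sum.distrib[symmetric] algebra_simps)
    also have "\<dots> = y (tail e) - y (head e)" by (rule rw_dual)
    also have "(\<Sum>e'\<in>UNIV. la (Inr (Inr (Inl e'))) * (if e' = e then 1 else 0)) = la (Inr (Inr (Inl e)))"
      using delta_sum'[of "\<lambda>e'. la (Inr (Inr (Inl e')))" e 1] by (simp add: eq_commute)
    also have "(\<Sum>k\<in>UNIV. la (Inr (Inr (Inr k))) * (if e = Inl k then -1 else 0)) = - ext_toll t e"
      unfolding t_def by (rule toll_col)
    finally show ?thesis by simp
  qed
  have "(t, y) \<in> DF" unfolding dual_feasible_def nonneg_vec_def
    using col r(2) by (auto simp: t_def)
  moreover have "arc_cost c x = dual_obj orig dst w t y"
  proof -
    have "(\<Sum>i\<in>UNIV. la i * b2 w i) = (\<Sum>i\<in>UNIV. la (Inl i) * ns i) - (\<Sum>i\<in>UNIV. la (Inr (Inl i)) * ns i)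
        - (\<Sum>k\<in>UNIV. la (Inr (Inr (Inr k))) * w $ k)"
      by (simp add: sum4 b2_def sum_negf)
    also have "\<dots> = dual_obj orig dst w t y"
      unfolding dual_obj_def y_def t_def inner_vec_def
      by (simp add: algebra_simps sum_subtractf)
    finally show ?thesis using r(4) unfolding arc_cost_def by simp
  qed
  ultimately show ?thesis using r(1) feas2 by blast
qed

end



context net
begin

abbreviation "TT \<equiv> bT tail head orig dst c"
abbreviation "WW \<equiv> bW tail head orig dst c"
abbreviation "LF \<equiv> lower_feasible tail head orig dst"
abbreviation "obj \<equiv> dual_obj orig dst"

lemma opt:
  assumes w: "nonneg_vec w"
  shows "\<exists>x t y. x \<in> XS \<and> cap x w \<and> (t, y) \<in> DF \<and> arc_cost c x = Gv w \<and> obj w t y = Gv w"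
proof -
  from L2[OF w] obtain x t y where r: "x \<in> XS" "cap x w" "(t, y) \<in> DF" "arc_cost c x = obj w t y"
    by blast
  have "Gv w \<le> arc_cost c x" using r by (intro Gv_lower)
  moreover have "obj w t y \<le> Gv w" unfolding Gv_def
    by (rule cInf_greatest) (use r WD in auto)
  ultimately show ?thesis using r by (intro exI[of _ x] exI[of _ t] exI[of _ y]) auto
qed

lemma dual_le_Gv: "nonneg_vec w \<Longrightarrow> (t, y) \<in> DF \<Longrightarrow> obj w t y \<le> Gv w"
proof -
  assume w: "nonneg_vec w" and ty: "(t, y) \<in> DF"
  obtain x where "x \<in> XS" "cap x w" "arc_cost c x = Gv w" using opt[OF w] by blast
  with WD[OF _ _ ty] show ?thesis by fastforce
qed

lemma bT_iff: "nonneg_vec w \<Longrightarrow> t \<in> TT w \<longleftrightarrow> (\<exists>y. (t, y) \<in> DF \<and> obj w t y = Gv w)"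
proof -
  assume w: "nonneg_vec w"
  obtain t0 y0 where o: "(t0, y0) \<in> DF" "obj w t0 y0 = Gv w" using opt[OF w] by blast
  show ?thesis
  proof
    assume "t \<in> TT w"
    then obtain y where y: "(t, y) \<in> DF" "\<forall>(t', y')\<in>DF. obj w t' y' \<le> obj w t y"
      unfolding bT_def by blast
    from y(2) o have "Gv w \<le> obj w t y" by fastforce
    with dual_le_Gv[OF w y(1)] y(1) show "\<exists>y. (t, y) \<in> DF \<and> obj w t y = Gv w" by force
  next
    assume "\<exists>y. (t, y) \<in> DF \<and> obj w t y = Gv w"
    then obtain y where y: "(t, y) \<in> DF" "obj w t y = Gv w" by blast
    have "\<forall>(t', y')\<in>DF. obj w t' y' \<le> obj w t y" using dual_le_Gv[OF w] y(2) by auto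
    with y(1) show "t \<in> TT w" unfolding bT_def by blast
  qed
qed

lemma bT_nonempty: "nonneg_vec w \<Longrightarrow> TT w \<noteq> {}"
  using opt bT_iff by blast

lemma bT_nonneg: "t \<in> TT w \<Longrightarrow> nonneg_vec t"
  unfolding bT_def dual_feasible_def by auto

lemma T1:
  assumes w: "nonneg_vec w" and t: "t \<in> TT w" and w': "nonneg_vec w'"
  shows "Gv w - t \<bullet> (w' - w) \<le> Gv w'"
proof -
  obtain y where y: "(t, y) \<in> DF" "obj w t y = Gv w" using t bT_iff[OF w] by blast
  have "obj w' t y \<le> Gv w'" by (rule dual_le_Gv[OF w' y(1)])
  moreover have "obj w' t y = obj w t y - t \<bullet> (w' - w)"
    unfolding dual_obj_def by (simp add: inner_diff_right inner_commute)
  ultimately show ?thesis using y by simp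
qed

lemma W_mem:
  assumes w: "nonneg_vec w" and t: "t \<in> TT w" and w1: "nonneg_vec w1"
    and le: "Gv w1 + t \<bullet> w1 \<le> Gv w + t \<bullet> w"
  shows "w1 \<in> WW t"
proof -
  obtain x1 where x1: "x1 \<in> XS" "cap x1 w1" "arc_cost c x1 = Gv w1" using opt[OF w1] by blast
  have "arc_cost c x1 + t \<bullet> w1 \<le> arc_cost c x' + t \<bullet> w'" if "(w', x') \<in> LF" for w' x'
  proof -
    from that have x': "x' \<in> XS" "cap x' w'" "nonneg_vec w'" unfolding lower_feasible_def by auto
    have "Gv w' \<le> arc_cost c x'" using x' by (intro Gv_lower)
    moreover have "Gv w - t \<bullet> (w' - w) \<le> Gv w'" by (rule T1[OF w t x'(3)])
    ultimately show ?thesis using le x1 by (simp add: inner_diff_right)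
  qed
  moreover have "(w1, x1) \<in> LF" using x1 w1 unfolding lower_feasible_def by auto
  ultimately show ?thesis unfolding bW_def by blast
qed

lemma W_mem_D:
  assumes w: "nonneg_vec w" and w1: "w1 \<in> WW t"
  shows "nonneg_vec w1 \<and> Gv w1 + t \<bullet> w1 \<le> Gv w + t \<bullet> w"
proof -
  from w1 obtain x1 where x1: "(w1, x1) \<in> LF"
    and mn: "\<forall>(w', x')\<in>LF. arc_cost c x1 + t \<bullet> w1 \<le> arc_cost c x' + t \<bullet> w'"
    unfolding bW_def by blast
  obtain x where x: "x \<in> XS" "cap x w" "arc_cost c x = Gv w" using opt[OF w] by blast
  have "(w, x) \<in> LF" using x w unfolding lower_feasible_def by auto
  with mn have "arc_cost c x1 + t \<bullet> w1 \<le> Gv w + t \<bullet> w" using x by auto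
  moreover have "Gv w1 \<le> arc_cost c x1" using x1 unfolding lower_feasible_def by (auto intro: Gv_lower)
  ultimately show ?thesis using x1 unfolding lower_feasible_def by auto
qed

lemma fval_nonneg: "nonneg_vec t \<Longrightarrow> 0 \<le> fval tail head orig dst c t"
  unfolding fval_def
  by (auto intro!: INF_greatest simp: arc_cost_nonneg toll_nonneg)

lemma gval_eq:
  assumes w: "nonneg_vec w"
  shows "gval tail head orig dst c w = ereal (Gv w)"
proof -
  obtain x t y where r: "x \<in> XS" "cap x w" "(t, y) \<in> DF" "arc_cost c x = Gv w" "obj w t y = Gv w"
    using opt[OF w] by blast
  show ?thesis unfolding gval_def
  proof (rule antisym)
    show "(SUP t. fval tail head orig dst c t - ereal (t \<bullet> w)) \<le> ereal (Gv w)"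
    proof (rule SUP_least)
      fix t' :: "real^'k"
      show "fval tail head orig dst c t' - ereal (t' \<bullet> w) \<le> ereal (Gv w)"
      proof (cases "nonneg_vec t'")
        case True
        have "fval tail head orig dst c t' \<le> ereal (arc_cost c x + t' \<bullet> restrA1 x)"
          unfolding fval_def using True r(1) by (auto intro: INF_lower)
        then have "fval tail head orig dst c t' - ereal (t' \<bullet> w) \<le> ereal (arc_cost c x + t' \<bullet> restrA1 x - t' \<bullet> w)"
          by (rule ereal_minus_le_aux)
        moreover have "t' \<bullet> restrA1 x \<le> t' \<bullet> w"
          using True r(2) unfolding nonneg_vec_def inner_vec_def restrA1_def
          by (auto intro!: sum_mono mult_left_mono)
        ultimately show ?thesis using r(4) by (simp add: order_trans)
      next
        case False
        then show ?thesis unfolding fval_def by simp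
      qed
    qed
  next
    have tn: "nonneg_vec t" using r(3) unfolding dual_feasible_def by auto
    have "ereal (\<Sum>i\<in>UNIV. ns i * y i) \<le> fval tail head orig dst c t"
      unfolding fval_def using tn WD0[OF _ r(3)] by (auto intro!: INF_greatest)
    then have "ereal ((\<Sum>i\<in>UNIV. ns i * y i) - t \<bullet> w) \<le> fval tail head orig dst c t - ereal (t \<bullet> w)"
      by (rule ereal_minus_ge_aux)
    moreover have "(\<Sum>i\<in>UNIV. ns i * y i) - t \<bullet> w = Gv w"
      using r(5) unfolding dual_obj_def by (simp add: inner_commute)
    ultimately show "ereal (Gv w) \<le> (SUP t. fval tail head orig dst c t - ereal (t \<bullet> w))"
      by (intro SUP_upper2[of t]) auto
  qed
qed

lemma gval_big:
  assumes w: "\<not> nonneg_vec w"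
  shows "ereal z < gval tail head orig dst c w"
proof -
  obtain k where k: "w $ k < 0" using w unfolding nonneg_vec_def by (auto simp: not_le)
  define M where "M = (\<bar>z\<bar> + 1) / (- (w $ k))"
  have M0: "0 < M" unfolding M_def using k by (intro divide_pos_pos) auto
  define t where "t = ((\<chi> j. if j = k then M else 0) :: real^'k)"
  have tn: "nonneg_vec t" unfolding t_def nonneg_vec_def using M0 by auto
  have "t \<bullet> w = (\<Sum>j\<in>UNIV. (if j = k then M else 0) * w $ j)" unfolding t_def inner_vec_def by simp
  also have "\<dots> = M * w $ k" by (rule delta_sum)
  also have "\<dots> = - (\<bar>z\<bar> + 1)" unfolding M_def using k by simp
  finally have tw: "t \<bullet> w = - (\<bar>z\<bar> + 1)" .
  have "ereal (0 - t \<bullet> w) \<le> fval tail head orig dst c t - ereal (t \<bullet> w)"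
    using fval_nonneg[OF tn] by (intro ereal_minus_ge_aux) (simp add: zero_ereal_def)
  moreover have "ereal z < ereal (0 - t \<bullet> w)" using tw by simp
  ultimately have "ereal z < fval tail head orig dst c t - ereal (t \<bullet> w)" by (meson less_le_trans)
  also have "\<dots> \<le> gval tail head orig dst c w" unfolding gval_def by (rule SUP_upper) simp
  finally show ?thesis .
qed

lemma epi_iff: "(w, z) \<in> epi_g tail head orig dst c \<longleftrightarrow> nonneg_vec w \<and> Gv w \<le> z"
  unfolding epi_g_def using gval_eq gval_big[of w z] by (cases "nonneg_vec w") (auto simp: not_le[symmetric])

end



lemma sum5: fixes f :: "'a::finite + 'b::finite + 'c::finite + 'd::finite + 'g::finite \<Rightarrow> real"
  shows "sum f UNIV = (\<Sum>a\<in>UNIV. f (Inl a)) + (\<Sum>a\<in>UNIV. f (Inr (Inl a)))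
     + (\<Sum>a\<in>UNIV. f (Inr (Inr (Inl a)))) + (\<Sum>a\<in>UNIV. f (Inr (Inr (Inr (Inl a)))))
     + (\<Sum>a\<in>UNIV. f (Inr (Inr (Inr (Inr a)))))"
  by (simp add: sum_UNIV_sum add.assoc)

lemma sum_j: fixes f :: "'a::finite + unit \<Rightarrow> real"
  shows "sum f UNIV = (\<Sum>e\<in>UNIV. f (Inl e)) + f (Inr ())"
  by (simp add: sum_UNIV_sum UNIV_unit)

lemma capiff: "(- a \<le> b - (x::real)) = (x \<le> a + b)" by linarith

lemma all5: "(\<forall>i. P i) \<longleftrightarrow> (\<forall>v. P (Inl v)) \<and> (\<forall>v. P (Inr (Inl v))) \<and> (\<forall>e. P (Inr (Inr (Inl e))))
   \<and> (\<forall>k. P (Inr (Inr (Inr (Inl k))))) \<and> (\<forall>u. P (Inr (Inr (Inr (Inr u)))))"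
  by (metis sum.exhaust)

lemma ext_lin: "ext_toll (a *\<^sub>R (t0 + t)) e = a * (ext_toll t0 e + ext_toll t e)"
  by (cases e) (simp_all add: ext_toll_def)

context net
begin

lemma comb_opt:
  assumes w: "nonneg_vec w" and o: "(t0, y0) \<in> DF" "obj w t0 y0 = Gv w"
    and l: "0 \<le> lam" and tn: "nonneg_vec t"
    and ty: "\<forall>e. y (tail e) - y (head e) - ext_toll t e \<le> lam * c e"
    and ob: "lam * Gv w \<le> obj w t y"
  shows "(1 / (1 + lam)) *\<^sub>R (t0 + t) \<in> TT w"
proof -
  define a where "a = 1 / (1 + lam)"
  have a0: "0 < a" unfolding a_def using l by simp
  have a1: "a * (1 + lam) = 1" unfolding a_def using l by simp
  define y' where "y' = (\<lambda>i. a * (y0 i + y i))"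
  have df: "(a *\<^sub>R (t0 + t), y') \<in> DF"
    unfolding dual_feasible_def
  proof (intro CollectI case_prodI conjI allI)
    fix e
    have "y0 (tail e) - y0 (head e) - ext_toll t0 e \<le> c e" using o(1) unfolding dual_feasible_def by auto
    moreover have "y (tail e) - y (head e) - ext_toll t e \<le> lam * c e" using ty by auto
    ultimately have "a * ((y0 (tail e) - y0 (head e) - ext_toll t0 e) + (y (tail e) - y (head e) - ext_toll t e))
        \<le> a * (c e + lam * c e)" using a0 by (intro mult_left_mono) auto
    also have "a * (c e + lam * c e) = (a * (1 + lam)) * c e" by (simp add: algebra_simps)
    also have "\<dots> = c e" using a1 by simp
    finally show "y' (tail e) - y' (head e) - ext_toll (a *\<^sub>R (t0 + t)) e \<le> c e"
      unfolding y'_def ext_lin by (simp add: algebra_simps)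
  next
    show "nonneg_vec (a *\<^sub>R (t0 + t))"
      using o(1) tn a0 unfolding dual_feasible_def nonneg_vec_def by auto
  qed
  have oe: "obj w (a *\<^sub>R (t0 + t)) y' = a * (obj w t0 y0 + obj w t y)"
    unfolding dual_obj_def y'_def
    by (simp add: algebra_simps sum.distrib sum_distrib_left inner_add_right)
  have ge: "Gv w \<le> a * (obj w t0 y0 + obj w t y)"
  proof -
    have "a * (Gv w + lam * Gv w) \<le> a * (obj w t0 y0 + obj w t y)" using o(2) ob a0 by simp
    moreover have "a * (Gv w + lam * Gv w) = (a * (1 + lam)) * Gv w" by (simp add: algebra_simps)
    moreover have "(a * (1 + lam)) * Gv w = Gv w" using a1 by simp
    ultimately show ?thesis by simp
  qed
  have "obj w (a *\<^sub>R (t0 + t)) y' \<le> Gv w" by (rule dual_le_Gv[OF w df])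
  with oe ge have "obj w (a *\<^sub>R (t0 + t)) y' = Gv w" by simp
  with df have "\<exists>y. (a *\<^sub>R (t0 + t), y) \<in> DF \<and> obj w (a *\<^sub>R (t0 + t)) y = Gv w" by blast
  then show ?thesis unfolding a_def using bT_iff[OF w] by blast
qed

definition A3 :: "real^'k \<Rightarrow> real \<Rightarrow> 'v + 'v + ('k + 'f) + 'k + unit \<Rightarrow> ('k + 'f) + unit \<Rightarrow> real" where
  "A3 d \<beta> = case_sum (\<lambda>v. case_sum (\<lambda>e. rw tail head v e) (\<lambda>_. 0))
     (case_sum (\<lambda>v. case_sum (\<lambda>e. - rw tail head v e) (\<lambda>_. 0))
     (case_sum (\<lambda>e'. case_sum (\<lambda>e. if e' = e then 1 else 0) (\<lambda>_. 0))
     (case_sum (\<lambda>k. case_sum (\<lambda>e. if e = Inl k then -1 else 0) (\<lambda>_. d $ k))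
       (\<lambda>u. case_sum (\<lambda>e. - c e) (\<lambda>_. - \<beta>)))))"

definition b3 :: "real^'k \<Rightarrow> 'v + 'v + ('k + 'f) + 'k + unit \<Rightarrow> real" where
  "b3 w = case_sum ns (case_sum (\<lambda>i. - ns i) (case_sum (\<lambda>e. 0) (case_sum (\<lambda>k. - w $ k) (\<lambda>u. - Gv w))))"

definition cc3 :: "('k + 'f) + unit \<Rightarrow> real" where
  "cc3 = case_sum (\<lambda>e. 0) (\<lambda>_. -1)"

lemma feas3: "(\<forall>i. b3 w i \<le> (\<Sum>j\<in>UNIV. A3 d \<beta> i j * z j)) \<longleftrightarrow>
   (\<lambda>e. z (Inl e)) \<in> XS \<and> (\<forall>k. z (Inl (Inl k)) \<le> w $ k + z (Inr ()) * d $ k)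
   \<and> arc_cost c (\<lambda>e. z (Inl e)) + \<beta> * z (Inr ()) \<le> Gv w"
proof -
  have d1: "(\<Sum>j\<in>UNIV. (if e' = j then 1 else 0) * z (Inl j)) = z (Inl e')" for e'
    using delta_sum'[of "\<lambda>j. z (Inl j)" e' 1] by (simp add: mult.commute)
  have d2: "(\<Sum>j\<in>UNIV. (if j = Inl k then -1 else 0) * z (Inl j)) = - z (Inl (Inl k))" for k
    using delta_sum[of "Inl k" "-1" "\<lambda>j. z (Inl j)"] by simp
  show ?thesis
    unfolding all5[where P="\<lambda>i. b3 w i \<le> (\<Sum>j\<in>UNIV. A3 d \<beta> i j * z j)"]
    by (auto simp: A3_def b3_def sum_j sum_negf d1 d2 XS_iff arc_cost_def mult.commute[of "z (Inr ())"] capiff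
        intro: order.antisym)
qed

lemma L3:
  assumes w: "nonneg_vec w" and hyp: "\<forall>t\<in>TT w. d \<bullet> t = \<beta>"
  shows "\<exists>x s. 0 < s \<and> x \<in> XS \<and> (\<forall>k. x (Inl k) \<le> w $ k + s * d $ k) \<and> arc_cost c x + \<beta> * s \<le> Gv w"
proof (rule ccontr)
  assume na: "\<not> ?thesis"
  obtain x0 t0 y0 where o: "x0 \<in> XS" "cap x0 w" "(t0, y0) \<in> DF" "arc_cost c x0 = Gv w" "obj w t0 y0 = Gv w"
    using opt[OF w] by blast
  have feas: "\<exists>z. \<forall>i. b3 w i \<le> (\<Sum>j\<in>UNIV. A3 d \<beta> i j * z j)"
    unfolding feas3 using o by (intro exI[of _ "case_sum x0 (\<lambda>_. 0)"]) auto
  have sle: "z (Inr ()) \<le> 0" if "\<forall>i. b3 w i \<le> (\<Sum>j\<in>UNIV. A3 d \<beta> i j * z j)" for z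
  proof (rule ccontr)
    assume "\<not> z (Inr ()) \<le> 0"
    then have "0 < z (Inr ())" by simp
    moreover have "(\<lambda>e. z (Inl e)) \<in> XS" "\<forall>k. z (Inl (Inl k)) \<le> w $ k + z (Inr ()) * d $ k"
      "arc_cost c (\<lambda>e. z (Inl e)) + \<beta> * z (Inr ()) \<le> Gv w" using that unfolding feas3 by auto
    ultimately have "\<exists>x s. 0 < s \<and> x \<in> XS \<and> (\<forall>k. x (Inl k) \<le> w $ k + s * d $ k) \<and> arc_cost c x + \<beta> * s \<le> Gv w"
      by (intro exI[of _ "\<lambda>e. z (Inl e)"] exI[of _ "z (Inr ())"]) simp
    with na show False by blast
  qed
  have bnd: "\<forall>z. (\<forall>i. b3 w i \<le> (\<Sum>j\<in>UNIV. A3 d \<beta> i j * z j)) \<longrightarrow> 0 \<le> (\<Sum>j\<in>UNIV. cc3 j * z j)"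
    using sle by (auto simp: sum_j cc3_def)
  from LP_matrix[OF feas bnd] obtain z la where
    r: "\<forall>i. b3 w i \<le> (\<Sum>j\<in>UNIV. A3 d \<beta> i j * z j)" "\<forall>i. 0 \<le> la i"
       "\<forall>j. cc3 j = (\<Sum>i\<in>UNIV. la i * A3 d \<beta> i j)" "(\<Sum>j\<in>UNIV. cc3 j * z j) = (\<Sum>i\<in>UNIV. la i * b3 w i)"
    by blast
  define y where "y = (\<lambda>i. la (Inl i) - la (Inr (Inl i)))"
  define t where "t = (\<chi> k. la (Inr (Inr (Inr (Inl k)))))"
  define lam where "lam = la (Inr (Inr (Inr (Inr ()))))"
  have lam0: "0 \<le> lam" unfolding lam_def using r(2) by simp
  have tn: "nonneg_vec t" unfolding t_def nonneg_vec_def using r(2) by simp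
  have col: "0 = (y (tail e) - y (head e)) + la (Inr (Inr (Inl e))) - ext_toll t e - lam * c e" for e
  proof -
    have "0 = (\<Sum>i\<in>UNIV. la (Inl i) * rw tail head i e) + (\<Sum>i\<in>UNIV. la (Inr (Inl i)) * - rw tail head i e)
       + (\<Sum>e'\<in>UNIV. la (Inr (Inr (Inl e'))) * (if e' = e then 1 else 0))
       + (\<Sum>k\<in>UNIV. la (Inr (Inr (Inr (Inl k)))) * (if e = Inl k then -1 else 0))
       + lam * - c e"
      using r(3)[rule_format, of "Inl e"] by (simp add: sum5 A3_def cc3_def lam_def UNIV_unit)
    also have "(\<Sum>i\<in>UNIV. la (Inl i) * rw tail head i e) + (\<Sum>i\<in>UNIV. la (Inr (Inl i)) * - rw tail head i e)
        = (\<Sum>i\<in>UNIV. y i * rw tail head i e)"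
      unfolding y_def by (simp add: sum_negf[symmetric] sum.distrib[symmetric] algebra_simps)
    also have "\<dots> = y (tail e) - y (head e)" by (rule rw_dual)
    also have "(\<Sum>e'\<in>UNIV. la (Inr (Inr (Inl e'))) * (if e' = e then 1 else 0)) = la (Inr (Inr (Inl e)))"
      using delta_sum'[of "\<lambda>e'. la (Inr (Inr (Inl e')))" e 1] by (simp add: eq_commute)
    also have "(\<Sum>k\<in>UNIV. la (Inr (Inr (Inr (Inl k)))) * (if e = Inl k then -1 else 0)) = - ext_toll t e"
      unfolding t_def by (rule toll_col)
    finally show ?thesis by simp
  qed
  have ty: "\<forall>e. y (tail e) - y (head e) - ext_toll t e \<le> lam * c e"
    using col r(2) by (smt (verit))
  have cols: "-1 = t \<bullet> d - lam * \<beta>"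
    using r(3)[rule_format, of "Inr ()"] by (simp add: sum5 A3_def cc3_def lam_def t_def inner_vec_def UNIV_unit)
  have "(\<Sum>i\<in>UNIV. la i * b3 w i) = obj w t y - lam * Gv w"
  proof -
    have "(\<Sum>i\<in>UNIV. la i * b3 w i) = (\<Sum>i\<in>UNIV. la (Inl i) * ns i) - (\<Sum>i\<in>UNIV. la (Inr (Inl i)) * ns i)
        - (\<Sum>k\<in>UNIV. la (Inr (Inr (Inr (Inl k)))) * w $ k) - lam * Gv w"
      by (simp add: sum5 b3_def sum_negf lam_def UNIV_unit)
    also have "\<dots> = obj w t y - lam * Gv w"
      unfolding dual_obj_def y_def t_def inner_vec_def
      by (simp add: algebra_simps sum_subtractf)
    finally show ?thesis .
  qed
  moreover have "(\<Sum>j\<in>UNIV. cc3 j * z j) = - z (Inr ())" by (simp add: sum_j cc3_def)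
  ultimately have ob: "lam * Gv w \<le> obj w t y" using sle[OF r(1)] r(4) by simp
  have mem: "(1 / (1 + lam)) *\<^sub>R (t0 + t) \<in> TT w"
    by (rule comb_opt[OF w o(3) o(5) lam0 tn ty ob])
  have t0T: "t0 \<in> TT w" using bT_iff[OF w] o by blast
  have dt0: "d \<bullet> t0 = \<beta>" using hyp t0T by blast
  have dt: "d \<bullet> t = \<beta> * lam - 1" using cols by (simp add: inner_commute mult.commute)
  have "d \<bullet> ((1 / (1 + lam)) *\<^sub>R (t0 + t)) = (1 / (1 + lam)) * (d \<bullet> t0 + d \<bullet> t)"
    by (simp only: inner_scaleR_right inner_add_right)
  also have "\<dots> = (1 / (1 + lam)) * (\<beta> + \<beta> * lam - 1)" by (simp add: dt0 dt)
  also have "\<dots> = \<beta> - 1 / (1 + lam)" using lam0 by (simp add: field_simps)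
  finally have "d \<bullet> ((1 / (1 + lam)) *\<^sub>R (t0 + t)) \<noteq> \<beta>" using lam0 by simp
  with hyp mem show False by blast
qed

end



context net
begin

abbreviation "EPI \<equiv> epi_g tail head orig dst c"

lemma b_iff_d:
  assumes w: "nonneg_vec w"
  shows "reaction_set tail head orig dst c {w} \<longleftrightarrow> (w, Gv w) extreme_point_of EPI"
proof
  assume "(w, Gv w) extreme_point_of EPI"
  then have f: "{(w, Gv w)} face_of EPI" by (simp add: face_of_singleton)
  have "{p - q |p q. p \<in> {(w, Gv w)} \<and> q \<in> {(w, Gv w)}} = {0}" by (auto simp: zero_prod_def)
  then have "aff_direction {(w, Gv w)} = {0}" unfolding aff_direction_def by simp
  then have "((0::real^'k), (1::real)) \<notin> aff_direction {(w, Gv w)}" by (simp add: zero_prod_def)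
  with f show "reaction_set tail head orig dst c {w}"
    unfolding reaction_set_def by (intro exI[of _ "{(w, Gv w)}"]) auto
next
  assume "reaction_set tail head orig dst c {w}"
  then obtain F where F: "F face_of EPI" "((0::real^'k), (1::real)) \<notin> aff_direction F" "{w} = fst ` F"
    unfolding reaction_set_def by blast
  then obtain p where p: "p \<in> F" "fst p = w" by (metis imageE insertI1)
  have "F = {p}"
  proof (intro set_eqI iffI)
    fix q assume q: "q \<in> F"
    then have "fst q = w" using F(3) by (metis imageI singletonD)
    have "q - p \<in> aff_direction F" unfolding aff_direction_def
      by (rule span_base) (use q p in blast)
    show "q \<in> {p}"
    proof (rule ccontr)
      assume "q \<notin> {p}"
      then have ne: "snd q \<noteq> snd p" using \<open>fst q = w\<close> p(2) by (metis prod_eqI singletonI)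
      have "(1 / (snd q - snd p)) *\<^sub>R (q - p) \<in> aff_direction F"
        unfolding aff_direction_def by (rule span_mul) (use \<open>q - p \<in> aff_direction F\<close> in \<open>simp add: aff_direction_def\<close>)
      moreover have "(1 / (snd q - snd p)) *\<^sub>R (q - p) = ((0::real^'k), (1::real))"
        using ne \<open>fst q = w\<close> p(2) by (simp add: prod_eq_iff)
      ultimately show False using F(2) by simp
    qed
  qed (use p in simp)
  with F(1) have ext: "p extreme_point_of EPI" by (simp add: face_of_singleton)
  obtain z where pz: "p = (w, z)" using p(2) by (cases p) auto
  have "(w, z) \<in> EPI" using ext pz by (simp add: extreme_point_of_def)
  then have z: "Gv w \<le> z" using epi_iff by simp
  have "z = Gv w"
  proof (rule ccontr)
    assume "z \<noteq> Gv w"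
    with z have lt: "Gv w < z" by simp
    have "(w, Gv w) \<in> EPI" "(w, 2 * z - Gv w) \<in> EPI" using w lt epi_iff by auto
    moreover have "(w, z) \<in> open_segment (w, Gv w) (w, 2 * z - Gv w)"
    proof -
      have f: "(1 - 1/2) *\<^sub>R w + (1/2::real) *\<^sub>R w = w" by (simp flip: scaleR_add_left)
      have s: "(1 - 1/2) * Gv w + (1/2::real) * (2 * z - Gv w) = z" by (simp add: algebra_simps)
      have "(w, z) = (1 - 1/2) *\<^sub>R (w, Gv w) + (1/2::real) *\<^sub>R (w, 2 * z - Gv w)"
        using f s by simp
      moreover have "(w, Gv w) \<noteq> (w, 2 * z - Gv w)" using lt by simp
      ultimately show ?thesis unfolding in_segment by (intro conjI exI[of _ "1/2"]) auto
    qed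
    ultimately show False using ext pz unfolding extreme_point_of_def by blast
  qed
  with ext pz show "(w, Gv w) extreme_point_of EPI" by simp
qed

lemma d_of_c:
  assumes w: "nonneg_vec w" and cW: "bW_set tail head orig dst c (TT w) = {w}"
  shows "(w, Gv w) extreme_point_of EPI"
  unfolding extreme_point_of_def
proof (intro conjI ballI)
  show "(w, Gv w) \<in> EPI" using w epi_iff by simp
next
  fix p q assume p: "p \<in> EPI" and q: "q \<in> EPI"
  obtain w1 z1 where p': "p = (w1, z1)" by (cases p)
  obtain w2 z2 where q': "q = (w2, z2)" by (cases q)
  have e1: "nonneg_vec w1" "Gv w1 \<le> z1" using p p' epi_iff by auto
  have e2: "nonneg_vec w2" "Gv w2 \<le> z2" using q q' epi_iff by auto
  show "(w, Gv w) \<notin> open_segment p q"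
  proof
    assume "(w, Gv w) \<in> open_segment p q"
    then obtain u where pq: "p \<noteq> q" and u: "0 < u" "u < 1" and
      eq: "(w, Gv w) = (1 - u) *\<^sub>R p + u *\<^sub>R q" unfolding in_segment by blast
    have ew: "w = (1 - u) *\<^sub>R w1 + u *\<^sub>R w2" and ez: "Gv w = (1 - u) * z1 + u * z2"
      using eq p' q' by auto
    have key: "z1 - Gv w + t \<bullet> (w1 - w) = 0 \<and> z2 - Gv w + t \<bullet> (w2 - w) = 0" if t: "t \<in> TT w" for t
    proof -
      have a1: "0 \<le> z1 - Gv w + t \<bullet> (w1 - w)" using T1[OF w t e1(1)] e1(2) by simp
      have a2: "0 \<le> z2 - Gv w + t \<bullet> (w2 - w)" using T1[OF w t e2(1)] e2(2) by simp
      have "(1 - u) *\<^sub>R (w1 - w) + u *\<^sub>R (w2 - w) = 0"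
        using ew by (simp add: algebra_simps)
      then have "t \<bullet> ((1 - u) *\<^sub>R (w1 - w) + u *\<^sub>R (w2 - w)) = 0" by simp
      then have "(1 - u) * (t \<bullet> (w1 - w)) + u * (t \<bullet> (w2 - w)) = 0"
        by (simp add: inner_add_right)
      then have sum0: "(1 - u) * (z1 - Gv w + t \<bullet> (w1 - w)) + u * (z2 - Gv w + t \<bullet> (w2 - w)) = 0"
        using ez by (simp add: algebra_simps)
      have m1: "0 \<le> (1 - u) * (z1 - Gv w + t \<bullet> (w1 - w))" using a1 u by simp
      have m2: "0 \<le> u * (z2 - Gv w + t \<bullet> (w2 - w))" using a2 u by simp
      have "(1 - u) * (z1 - Gv w + t \<bullet> (w1 - w)) = 0" "u * (z2 - Gv w + t \<bullet> (w2 - w)) = 0"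
        using sum0 m1 m2 by linarith+
      then show ?thesis using u by simp
    qed
    have "w1 \<in> WW t" if t: "t \<in> TT w" for t
    proof (rule W_mem[OF w t e1(1)])
      have "z1 - Gv w + t \<bullet> (w1 - w) = 0" using key[OF t] by simp
      then show "Gv w1 + t \<bullet> w1 \<le> Gv w + t \<bullet> w" using e1(2) by (simp add: inner_diff_right)
    qed
    then have "w1 \<in> bW_set tail head orig dst c (TT w)" unfolding bW_set_def by blast
    with cW have w1w: "w1 = w" by simp
    have ew': "w = (1 - u) *\<^sub>R w + u *\<^sub>R w2" using ew unfolding w1w .
    have "(1 - u) *\<^sub>R w + u *\<^sub>R w2 - w = u *\<^sub>R (w2 - w)" by (simp add: algebra_simps)
    then have "u *\<^sub>R (w2 - w) = 0" using ew' by simp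
    then have w2w: "w2 = w" using u by simp
    obtain t where t: "t \<in> TT w" using bT_nonempty[OF w] by blast
    from key[OF t] w1w w2w have "z1 = Gv w" "z2 = Gv w" by auto
    with w1w w2w p' q' pq show False by simp
  qed
qed

lemma c_of_e:
  assumes w: "nonneg_vec w" and ad: "aff_dim (TT w) = int CARD('k)"
  shows "bW_set tail head orig dst c (TT w) = {w}"
proof (intro set_eqI iffI)
  fix w' assume w': "w' \<in> bW_set tail head orig dst c (TT w)"
  then have mem: "\<And>t. t \<in> TT w \<Longrightarrow> w' \<in> WW t" unfolding bW_set_def by blast
  obtain t0 where t0: "t0 \<in> TT w" using bT_nonempty[OF w] by blast
  have nw': "nonneg_vec w'" using W_mem_D[OF w mem[OF t0]] by simp
  show "w' \<in> {w}"
  proof (rule ccontr)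
    assume "w' \<notin> {w}"
    then have ne: "w' - w \<noteq> 0" by simp
    have "TT w \<subseteq> {t. (w' - w) \<bullet> t = Gv w - Gv w'}"
    proof
      fix t assume t: "t \<in> TT w"
      have "Gv w' + t \<bullet> w' \<le> Gv w + t \<bullet> w" using W_mem_D[OF w mem[OF t]] by simp
      moreover have "Gv w - t \<bullet> (w' - w) \<le> Gv w'" by (rule T1[OF w t nw'])
      ultimately show "t \<in> {t. (w' - w) \<bullet> t = Gv w - Gv w'}"
        by (simp add: inner_diff_right inner_diff_left inner_commute)
    qed
    then have "aff_dim (TT w) \<le> aff_dim {t. (w' - w) \<bullet> t = Gv w - Gv w'}" by (rule aff_dim_subset)
    also have "\<dots> = int CARD('k) - 1" using ne by simp
    finally show False using ad by simp
  qed
next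
  fix w' assume "w' \<in> {w}"
  then have "w' = w" by simp
  moreover have "w \<in> WW t" if "t \<in> TT w" for t by (rule W_mem[OF w that w]) simp
  ultimately show "w' \<in> bW_set tail head orig dst c (TT w)" unfolding bW_set_def by blast
qed

lemma e_of_d:
  assumes w: "nonneg_vec w" and ext: "(w, Gv w) extreme_point_of EPI"
  shows "aff_dim (TT w) = int CARD('k)"
proof (rule ccontr)
  assume "aff_dim (TT w) \<noteq> int CARD('k)"
  moreover have "aff_dim (TT w) \<le> int CARD('k)" using aff_dim_le_DIM[of "TT w"] by simp
  ultimately have "aff_dim (TT w) < int DIM(real^'k)" by simp
  then obtain a \<beta> where a: "a \<noteq> 0" "TT w \<subseteq> {x. a \<bullet> x = \<beta>}" by (rule aff_lowdim_subset_hyperplane)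
  have h1: "\<forall>t\<in>TT w. a \<bullet> t = \<beta>" using a by blast
  have h2: "\<forall>t\<in>TT w. (- a) \<bullet> t = - \<beta>" using a by auto
  obtain x1 s1 where r1: "0 < s1" "x1 \<in> XS" "\<forall>k. x1 (Inl k) \<le> w $ k + s1 * a $ k" "arc_cost c x1 + \<beta> * s1 \<le> Gv w"
    using L3[OF w h1] by blast
  obtain x2 s2 where r2: "0 < s2" "x2 \<in> XS" "\<forall>k. x2 (Inl k) \<le> w $ k + s2 * (- a) $ k" "arc_cost c x2 + (- \<beta>) * s2 \<le> Gv w"
    using L3[OF w h2] by blast
  define P1 where "P1 = (w + s1 *\<^sub>R a, Gv w - \<beta> * s1)"
  define P2 where "P2 = (w - s2 *\<^sub>R a, Gv w + \<beta> * s2)"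
  have x1n: "\<forall>e. 0 \<le> x1 e" and x2n: "\<forall>e. 0 \<le> x2 e" using r1(2) r2(2) unfolding Xset_def by auto
  have "P1 \<in> EPI" unfolding P1_def epi_iff
  proof
    show "nonneg_vec (w + s1 *\<^sub>R a)" unfolding nonneg_vec_def
    proof
      fix k show "0 \<le> (w + s1 *\<^sub>R a) $ k" using r1(3)[rule_format, of k] x1n[rule_format, of "Inl k"] by simp
    qed
    have "Gv (w + s1 *\<^sub>R a) \<le> arc_cost c x1" using r1 by (intro Gv_lower) auto
    then show "Gv (w + s1 *\<^sub>R a) \<le> Gv w - \<beta> * s1" using r1(4) by simp
  qed
  moreover have "P2 \<in> EPI" unfolding P2_def epi_iff
  proof
    show "nonneg_vec (w - s2 *\<^sub>R a)" unfolding nonneg_vec_def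
    proof
      fix k show "0 \<le> (w - s2 *\<^sub>R a) $ k" using r2(3)[rule_format, of k] x2n[rule_format, of "Inl k"] by simp
    qed
    have "Gv (w - s2 *\<^sub>R a) \<le> arc_cost c x2" using r2 by (intro Gv_lower) auto
    then show "Gv (w - s2 *\<^sub>R a) \<le> Gv w + \<beta> * s2" using r2(4) by simp
  qed
  moreover have "(w, Gv w) \<in> open_segment P1 P2"
    unfolding in_segment
  proof (intro conjI exI)
    show "P1 \<noteq> P2"
    proof
      assume "P1 = P2"
      then have "w + s1 *\<^sub>R a = w - s2 *\<^sub>R a" unfolding P1_def P2_def by simp
      then have "(s1 + s2) *\<^sub>R a = 0" by (simp add: algebra_simps)
      with r1(1) r2(1) a(1) show False by simp
    qed
    define u where "u = s1 / (s1 + s2)"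
    show "0 < u" "u < 1" unfolding u_def using r1(1) r2(1) by auto
    have u1: "(1 - u) * s1 = u * s2" unfolding u_def using r1(1) r2(1) by (simp add: field_simps)
    have "(1 - u) *\<^sub>R (w + s1 *\<^sub>R a) + u *\<^sub>R (w - s2 *\<^sub>R a) = w + ((1 - u) * s1 - u * s2) *\<^sub>R a"
      by (simp add: algebra_simps)
    also have "\<dots> = w" using u1 by simp
    finally have f: "(1 - u) *\<^sub>R (w + s1 *\<^sub>R a) + u *\<^sub>R (w - s2 *\<^sub>R a) = w" .
    have "(1 - u) * (Gv w - \<beta> * s1) + u * (Gv w + \<beta> * s2) = Gv w - \<beta> * ((1 - u) * s1 - u * s2)"
      by (simp add: algebra_simps)
    also have "\<dots> = Gv w" using u1 by simp
    finally have s: "(1 - u) * (Gv w - \<beta> * s1) + u * (Gv w + \<beta> * s2) = Gv w" .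
    show "(w, Gv w) = (1 - u) *\<^sub>R P1 + u *\<^sub>R P2"
      unfolding P1_def P2_def using f s by simp
  qed
  ultimately show False using ext unfolding extreme_point_of_def by blast
qed

end

theorem lemma4:
  fixes tail head :: "'k::finite + 'f::finite \<Rightarrow> 'v::finite"
    and c :: "'k + 'f \<Rightarrow> real"
    and orig dst :: 'v
    and w :: "real^'k"
  assumes no_loops: "\<forall>e. tail e \<noteq> head e"
    and c_nonneg: "\<forall>e. 0 \<le> c e"
    and od_distinct: "orig \<noteq> dst"
    and toll_free_path: "(orig, dst) \<in> {(tail (Inr a), head (Inr a)) | a. True}\<^sup>*"
    and w_nonneg: "nonneg_vec w"
  shows "(strongly_bilevel_feasible tail head orig dst c w \<longleftrightarrow> reaction_set tail head orig dst c {w})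
       \<and> (reaction_set tail head orig dst c {w} \<longleftrightarrow>
            bW_set tail head orig dst c (bT tail head orig dst c w) = {w})
       \<and> (bW_set tail head orig dst c (bT tail head orig dst c w) = {w} \<longleftrightarrow>
            (\<exists>z. gval tail head orig dst c w = ereal z \<and>
                 (w, z) extreme_point_of epi_g tail head orig dst c))
       \<and> ((\<exists>z. gval tail head orig dst c w = ereal z \<and>
                 (w, z) extreme_point_of epi_g tail head orig dst c) \<longleftrightarrow>
            aff_dim (bT tail head orig dst c w) = int CARD('k))"
proof -
  interpret net tail head c orig dst
    using c_nonneg od_distinct toll_free_path by unfold_locales
  have ab: "strongly_bilevel_feasible tail head orig dst c w \<longleftrightarrow> reaction_set tail head orig dst c {w}"
    using w_nonneg by (simp add: strongly_bilevel_feasible_def)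
  have dd: "(\<exists>z. gval tail head orig dst c w = ereal z \<and> (w, z) extreme_point_of epi_g tail head orig dst c)
      \<longleftrightarrow> (w, Gv w) extreme_point_of EPI"
    using gval_eq[OF w_nonneg] by auto
  show ?thesis
    unfolding ab dd
    using b_iff_d[OF w_nonneg] d_of_c[OF w_nonneg] c_of_e[OF w_nonneg] e_of_d[OF w_nonneg]
    by blast
qed


end
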